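(* Let $\rho\in(0,1)$ and let $S\in\mathbb{R}^{m\times n}$ be such that the event $\mathcal{E}^m_\rho$ holds, i.e. $\|C_S-I_d\|_2\leqslant\sqrt{\rho}$. Then for every $x\in\mathbb{R}^d$, $|\delta_x-\widetilde\delta_x|\leqslant\sqrt{\rho}\,\widetilde\delta_x$. Consequently, if $S$ is drawn from a random embedding with critical sketch size $m_\delta$ (for a given $\delta\in(0,1)$) and $m>m_\delta$, then with probability at least $1-\delta$ we have $|\delta_x-\widetilde\delta_x|\leqslant\sqrt{m_\delta/m}\,\widetilde\delta_x$ for all $x\in\mathbb{R}^d$.
   Context: Let $A\in\mathbb{R}^{n\times d}$ with $n\geqslant d$, $b\in\mathbb{R}^d$, $\Lambda\in\mathbb{R}^{d\times d}$ diagonal with $\Lambda\succeq I_d$, and $\nu>0$. Set $H=A^\top A+\nu^2\Lambda$, $f(x)=\frac12 x^\top Hx-b^\top x$ and $x^*=H^{-1}b$. For $S\in\mathbb{R}^{m\times n}$ set $H_S=A^\top S^\top SA+\nu^2\Lambda$ and $C_S=H^{-1/2}H_SH^{-1/2}$. For $x\in\mathbb{R}^d$ let $\delta_x=\frac12\|x-x^*\|_H^2$ (with $\|z\|_H^2=z^\top Hz$) and $\widetilde\delta_x=\frac12\nabla f(x)^\top H_S^{-1}\nabla f(x)$. For $\rho>0$, $\mathcal{E}^m_\rho$ denotes the event $\|C_S-I_d\|_2\leqslant\max\{\sqrt\rho,\rho\}$. A random embedding is a family of distributions of random matrices $S\in\mathbb{R}^{m\times n}$, one for each $m\geqslant1$;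 given $\delta\in(0,1)$ its critical sketch size is $m_\delta=\inf\{k\geqslant1:\ \mathbb{P}(\mathcal{E}^m_\rho)\geqslant1-\delta \text{ for all } \rho>0 \text{ and all } m\geqslant k/\rho\}$. *)

theory Defs
  imports "HOL-Probability.Probability"
begin

text \<open>A sketch S in R^{m x n} (m varying) is represented by
 its rows: S :: nat => real^'n, where S i is the i-th row (i < m); rows with index
 >= m are ignored.\<close>

definition diag_mat :: "real^'d^'d \<Rightarrow> bool" where
  "diag_mat M \<longleftrightarrow> (\<forall>i j. i \<noteq> j \<longrightarrow> M $ i $ j = 0)"

definition psd_mat :: "real^'d^'d \<Rightarrow> bool" where
  "psd_mat M \<longleftrightarrow> transpose M = M \<and> (\<forall>x. 0 \<le> x \<bullet> (M *v x))"

definition mat_sqrt :: "real^'d^'d \<Rightarrow> real^'d^'d" where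
  "mat_sqrt M = (THE R. psd_mat R \<and> R ** R = M)"

definition spec_norm :: "real^'d^'d \<Rightarrow> real" where
  "spec_norm M = onorm (\<lambda>x. M *v x)"

definition hess :: "real^'d^'n \<Rightarrow> real^'d^'d \<Rightarrow> real \<Rightarrow> real^'d^'d" where
  "hess A Lam nu = transpose A ** A + (nu^2) *\<^sub>R Lam"

text \<open>(SA)^T (SA), where row i of SA is (S i) v* A.\<close>
definition sketch_gram :: "nat \<Rightarrow> (nat \<Rightarrow> real^'n) \<Rightarrow> real^'d^'n \<Rightarrow> real^'d^'d" where
  "sketch_gram m S A = (\<chi> j k. \<Sum>i<m. ((S i) v* A) $ j * ((S i) v* A) $ k)"

definition hess_S :: "real^'d^'n \<Rightarrow> real^'d^'d \<Rightarrow> real \<Rightarrow> nat \<Rightarrow> (nat \<Rightarrow> real^'n) \<Rightarrow> real^'d^'d" where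
  "hess_S A Lam nu m S = sketch_gram m S A + (nu^2) *\<^sub>R Lam"

definition C_S :: "real^'d^'n \<Rightarrow> real^'d^'d \<Rightarrow> real \<Rightarrow> nat \<Rightarrow> (nat \<Rightarrow> real^'n) \<Rightarrow> real^'d^'d" where
  "C_S A Lam nu m S =
     (let Hmh = mat_sqrt (matrix_inv (hess A Lam nu)) in Hmh ** hess_S A Lam nu m S ** Hmh)"

definition event_E :: "real^'d^'n \<Rightarrow> real^'d^'d \<Rightarrow> real \<Rightarrow> nat \<Rightarrow> real \<Rightarrow> (nat \<Rightarrow> real^'n) \<Rightarrow> bool" where
  "event_E A Lam nu m rho S \<longleftrightarrow> spec_norm (C_S A Lam nu m S - mat 1) \<le> max (sqrt rho) rho"

definition fobj :: "real^'d^'n \<Rightarrow> real^'d^'d \<Rightarrow> real \<Rightarrow> real^'d \<Rightarrow> real^'d \<Rightarrow> real" where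
  "fobj A Lam nu b x = (1/2) * (x \<bullet> (hess A Lam nu *v x)) - b \<bullet> x"

definition grad_f :: "real^'d^'n \<Rightarrow> real^'d^'d \<Rightarrow> real \<Rightarrow> real^'d \<Rightarrow> real^'d \<Rightarrow> real^'d" where
  "grad_f A Lam nu b x = hess A Lam nu *v x - b"

definition xstar :: "real^'d^'n \<Rightarrow> real^'d^'d \<Rightarrow> real \<Rightarrow> real^'d \<Rightarrow> real^'d" where
  "xstar A Lam nu b = matrix_inv (hess A Lam nu) *v b"

definition delta :: "real^'d^'n \<Rightarrow> real^'d^'d \<Rightarrow> real \<Rightarrow> real^'d \<Rightarrow> real^'d \<Rightarrow> real" where
  "delta A Lam nu b x =
     (let z = x - xstar A Lam nu b in (1/2) * (z \<bullet> (hess A Lam nu *v z)))"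

definition delta_tilde :: "real^'d^'n \<Rightarrow> real^'d^'d \<Rightarrow> real \<Rightarrow> real^'d \<Rightarrow> nat \<Rightarrow> (nat \<Rightarrow> real^'n) \<Rightarrow> real^'d \<Rightarrow> real" where
  "delta_tilde A Lam nu b m S x =
     (let g = grad_f A Lam nu b x in (1/2) * (g \<bullet> (matrix_inv (hess_S A Lam nu m S) *v g)))"

text \<open>"P(E) >= p", read as: E contains a measurable event of probability >= p
 (coincides with the usual meaning when E is measurable).\<close>
definition prob_atleast :: "'a measure \<Rightarrow> 'a set \<Rightarrow> real \<Rightarrow> bool" where
  "prob_atleast M E p \<longleftrightarrow> (\<exists>F\<in>sets M. F \<subseteq> E \<and> measure M F \<ge> p)"

text \<open>A random embedding: D m is the distribution of the m x n sketch (rows representation).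
 The set of admissible k in the definition of the critical sketch size.\<close>
definition crit_set :: "real^'d^'n \<Rightarrow> real^'d^'d \<Rightarrow> real \<Rightarrow> (nat \<Rightarrow> (nat \<Rightarrow> real^'n) measure) \<Rightarrow> real \<Rightarrow> nat set" where
  "crit_set A Lam nu D dl = {k. k \<ge> 1 \<and>
     (\<forall>rho>0. \<forall>m::nat. m \<ge> 1 \<longrightarrow> real m \<ge> real k / rho \<longrightarrow>
        prob_atleast (D m) {S. event_E A Lam nu m rho S} (1 - dl))}"

definition crit_size :: "real^'d^'n \<Rightarrow> real^'d^'d \<Rightarrow> real \<Rightarrow> (nat \<Rightarrow> (nat \<Rightarrow> real^'n) measure) \<Rightarrow> real \<Rightarrow> nat" where
  "crit_size A Lam nu D dl = Inf (crit_set A Lam nu D dl)"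

end

theory Submission
  imports Defs
begin

lemma sym_inner:
  fixes M :: "real^'d^'d"
  assumes "transpose M = M"
  shows "x \<bullet> (M *v y) = (M *v x) \<bullet> y"
proof -
  have "x \<bullet> (M *v y) = (x v* M) \<bullet> y" by (simp add: dot_lmul_matrix)
  also have "x v* M = transpose M *v x" by simp
  finally show ?thesis using assms by simp
qed

lemma sym_from_inner:
  fixes M :: "real^'d^'d"
  assumes "\<And>x y. x \<bullet> (M *v y) = (M *v x) \<bullet> y"
  shows "transpose M = M"
proof -
  have "M *v y = transpose M *v y" for y
  proof -
    have "x \<bullet> (M *v y - transpose M *v y) = 0" for x
    proof -
      have "(M *v x) \<bullet> y = x \<bullet> (transpose M *v y)"
        by (metis dot_lmul_matrix vector_transpose_matrix)
      then show ?thesis using assms[of x y] by (simp add: inner_diff_right)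
    qed
    from this[of "M *v y - transpose M *v y"] show ?thesis by simp
  qed
  then show ?thesis by (metis matrix_eq)
qed

lemma eigvec_exists:
  fixes M :: "real^'d^'d"
  assumes sym: "transpose M = M" and sub: "subspace V" and inv: "\<forall>x\<in>V. M *v x \<in> V"
    and ne: "V \<noteq> {0}"
  shows "\<exists>x\<in>V. norm x = 1 \<and> (\<exists>l. M *v x = l *\<^sub>R x)"
proof -
  let ?K = "V \<inter> sphere 0 1"
  let ?q = "\<lambda>y. y \<bullet> (M *v y)"
  have cK: "compact ?K"
    using compact_Int_closed[OF compact_sphere closed_subspace[OF sub]] by (simp add: Int_commute)
  obtain v where v: "v \<in> V" "v \<noteq> 0" using ne sub subspace_0 by blast
  have "(1 / norm v) *\<^sub>R v \<in> ?K" using v sub by (simp add: subspace_scale)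
  then have neK: "?K \<noteq> {}" by blast
  have cont: "continuous_on ?K ?q"
    by (intro continuous_intros linear_continuous_on matrix_vector_mul_bounded_linear)
  obtain x0 where x0: "x0 \<in> ?K" and mx: "\<forall>y\<in>?K. ?q y \<le> ?q x0"
    using continuous_attains_sup[OF cK neK cont] by blast
  define l where "l = ?q x0"
  have x0V: "x0 \<in> V" and nx0: "norm x0 = 1" using x0 by auto
  have le: "?q y \<le> l * (y \<bullet> y)" if "y \<in> V" for y
  proof (cases "y = 0")
    case True then show ?thesis by simp
  next
    case False
    let ?u = "(1 / norm y) *\<^sub>R y"
    have "?u \<in> ?K" using that False sub by (simp add: subspace_scale)
    then have h1: "?q ?u \<le> l" using mx l_def by blast
    have h2: "?q ?u = ?q y / (norm y)^2"
      by (simp add: matrix_vector_mult_scaleR power2_eq_square)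
    have h3: "y \<bullet> y = (norm y)^2" by (simp add: power2_norm_eq_inner)
    have h4: "(norm y)^2 > 0" using False by simp
    from h1 h2 have "?q y / (norm y)^2 \<le> l" by simp
    then have "?q y \<le> l * (norm y)^2" using h4 by (simp add: pos_divide_le_eq)
    then show ?thesis using h3 by simp
  qed
  define N where "N y = l *\<^sub>R y - M *v y" for y
  have NV: "N y \<in> V" if "y \<in> V" for y
    unfolding N_def using that inv sub by (simp add: subspace_diff subspace_scale)
  have Npos: "0 \<le> y \<bullet> N y" if "y \<in> V" for y
    using le[OF that] by (simp add: N_def inner_diff_right algebra_simps)
  have Nsym: "x \<bullet> N y = y \<bullet> N x" for x y
    using sym_inner[OF sym, of x y] by (simp add: N_def inner_diff_right inner_commute)
  have Nlin: "N (x + t *\<^sub>R y) = N x + t *\<^sub>R N y" for x y t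
    by (simp add: N_def matrix_vector_right_distrib matrix_vector_mult_scaleR algebra_simps)
  have x00: "x0 \<bullet> N x0 = 0"
    using nx0 by (simp add: N_def l_def inner_diff_right power2_norm_eq_inner[symmetric])
  define w where "w = N x0"
  have wV: "w \<in> V" using NV x0V w_def by simp
  define a where "a = w \<bullet> w"
  define c where "c = w \<bullet> N w"
  have c0: "c \<ge> 0" using Npos[OF wV] c_def by simp
  have a0: "a \<ge> 0" using a_def by simp
  have key: "0 \<le> 2 * t * a + t^2 * c" for t
  proof -
    have "x0 + t *\<^sub>R w \<in> V" using x0V wV sub by (simp add: subspace_add subspace_scale)
    then have "0 \<le> (x0 + t *\<^sub>R w) \<bullet> N (x0 + t *\<^sub>R w)" by (rule Npos)
    also have "\<dots> = x0 \<bullet> N x0 + t * (x0 \<bullet> N w) + t * (w \<bullet> N x0) + t^2 * (w \<bullet> N w)"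
      by (simp add: Nlin inner_add_left inner_add_right power2_eq_square algebra_simps)
    also have "\<dots> = 2 * t * a + t^2 * c"
      using x00 Nsym[of x0 w] by (simp add: a_def c_def w_def)
    finally show ?thesis .
  qed
  have "a = 0"
  proof -
    define t where "t = - a / (1 + c)"
    have ht: "(1 + c) * t = - a" using c0 by (simp add: t_def)
    have "0 \<le> (2 * t * a + t^2 * c) * (1 + c)^2"
      using key[of t] c0 by simp
    also have "\<dots> = 2 * ((1 + c) * t) * a * (1 + c) + ((1 + c) * t)^2 * c"
      by (simp add: power2_eq_square algebra_simps)
    also have "\<dots> = -(a^2 * (2 + c))"
      unfolding ht by (simp add: power2_eq_square algebra_simps)
    finally have "a^2 * (2 + c) \<le> 0" by simp
    moreover have "2 + c > 0" using c0 by simp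
    ultimately have "a^2 \<le> 0" by (simp add: mult_le_0_iff)
    then show ?thesis by simp
  qed
  then have "N x0 = 0" using a_def w_def by simp
  then have "M *v x0 = l *\<^sub>R x0" by (simp add: N_def)
  then show ?thesis using x0V nx0 by blast
qed

lemma spectral_sub:
  fixes M :: "real^'d^'d"
  assumes sym: "transpose M = M"
  shows "subspace V \<Longrightarrow> (\<forall>x\<in>V. M *v x \<in> V) \<Longrightarrow>
    \<exists>B. B \<subseteq> V \<and> finite B \<and> pairwise orthogonal B \<and>
        (\<forall>b\<in>B. norm b = 1 \<and> (\<exists>l. M *v b = l *\<^sub>R b)) \<and> span B = V"
proof (induction "dim V" arbitrary: V rule: less_induct)
  case less
  show ?case
  proof (cases "V = {0}")
    case True
    then show ?thesis by (intro exI[of _ "{}"]) auto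
  next
    case False
    obtain x0 l where x0V: "x0 \<in> V" and nx0: "norm x0 = 1" and ex0: "M *v x0 = l *\<^sub>R x0"
      using eigvec_exists[OF sym less.prems False] by blast
    have x0x0: "x0 \<bullet> x0 = 1" using nx0 by (simp add: power2_norm_eq_inner[symmetric])
    define W where "W = {y\<in>V. x0 \<bullet> y = 0}"
    have subW: "subspace W"
      using less.prems(1) unfolding W_def subspace_def by (auto simp: inner_add_right)
    have invW: "\<forall>x\<in>W. M *v x \<in> W"
    proof
      fix y assume y: "y \<in> W"
      have "x0 \<bullet> (M *v y) = (M *v x0) \<bullet> y" by (rule sym_inner[OF sym])
      also have "\<dots> = 0" using y ex0 by (simp add: W_def)
      finally show "M *v y \<in> W" using y less.prems(2) by (simp add: W_def)
    qed
    have "x0 \<notin> W" using x0x0 by (simp add: W_def)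
    moreover have "W \<subseteq> V" by (auto simp: W_def)
    ultimately have "W \<subset> V" using x0V by blast
    moreover have "span W = W" "span V = V" using subW less.prems(1) by simp_all
    ultimately have "span W \<subset> span V" by (simp only:)
    then have "dim W < dim V" by (rule dim_psubset)
    then obtain B' where B': "B' \<subseteq> W" "finite B'" "pairwise orthogonal B'"
        "\<forall>b\<in>B'. norm b = 1 \<and> (\<exists>l. M *v b = l *\<^sub>R b)" "span B' = W"
      using less.hyps[OF _ subW invW] by blast
    define B where "B = insert x0 B'"
    have "B \<subseteq> V" using B'(1) x0V by (auto simp: B_def W_def)
    moreover have "finite B" using B'(2) by (simp add: B_def)
    moreover have "pairwise orthogonal B"
      using B'(1,3) unfolding B_def
      by (auto simp: pairwise_insert orthogonal_def W_def inner_commute)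
    moreover have "\<forall>b\<in>B. norm b = 1 \<and> (\<exists>l. M *v b = l *\<^sub>R b)"
      using B'(4) nx0 ex0 by (auto simp: B_def)
    moreover have "span B = V"
    proof
      show "span B \<subseteq> V" using \<open>B \<subseteq> V\<close> less.prems(1) by (rule span_minimal)
      show "V \<subseteq> span B"
      proof
        fix v assume v: "v \<in> V"
        have "v - (x0 \<bullet> v) *\<^sub>R x0 \<in> W"
          using v x0V x0x0 less.prems(1)
          by (simp add: W_def subspace_diff subspace_scale inner_diff_right)
        then have "v - (x0 \<bullet> v) *\<^sub>R x0 \<in> span B"
          using B'(5) by (metis B_def span_mono subset_insertI subsetD)
        moreover have "(x0 \<bullet> v) *\<^sub>R x0 \<in> span B"
          by (simp add: B_def span_base span_scale)
        ultimately have "(v - (x0 \<bullet> v) *\<^sub>R x0) + (x0 \<bullet> v) *\<^sub>R x0 \<in> span B"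
          by (rule span_add)
        then show "v \<in> span B" by simp
      qed
    qed
    ultimately show ?thesis by blast
  qed
qed

lemma sqrt_on_eig:
  fixes R M :: "real^'d^'d"
  assumes R: "psd_mat R" and RR: "R ** R = M" and eb: "M *v b = mu *\<^sub>R b" and mu: "mu \<ge> 0"
  shows "R *v b = sqrt mu *\<^sub>R b"
proof -
  define s where "s = sqrt mu"
  have s0: "s \<ge> 0" using mu by (simp add: s_def)
  have ss: "s * s = mu" using mu by (simp add: s_def)
  have symR: "transpose R = R" and posR: "\<And>x. 0 \<le> x \<bullet> (R *v x)" using R by (auto simp: psd_mat_def)
  have RRb: "R *v (R *v b) = mu *\<^sub>R b" using RR eb by (simp add: matrix_vector_mul_assoc)
  define e where "e = R *v b - s *\<^sub>R b"
  have Re: "R *v e = - s *\<^sub>R e"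
    unfolding e_def using RRb ss
    by (simp add: matrix_vector_mult_diff_distrib matrix_vector_mult_scaleR algebra_simps
        scaleR_diff_right)
  show ?thesis
  proof (cases "s > 0")
    case True
    have "0 \<le> e \<bullet> (R *v e)" by (rule posR)
    also have "\<dots> = - s * (e \<bullet> e)" using Re by simp
    finally have "e \<bullet> e \<le> 0" using True by (simp add: mult_le_0_iff)
    then have "e = 0" by (metis inner_eq_zero_iff inner_ge_zero order_antisym)
    then show ?thesis by (simp add: e_def s_def)
  next
    case False
    then have s00: "s = 0" using s0 by simp
    then have "mu = 0" using ss by simp
    have "(R *v b) \<bullet> (R *v b) = b \<bullet> (R *v (R *v b))"
      using sym_inner[OF symR, of b "R *v b"] by simp
    also have "\<dots> = 0" using RRb \<open>mu = 0\<close> by simp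
    finally have "R *v b = 0" by simp
    then show ?thesis using s00 by (simp add: s_def)
  qed
qed

lemma orth_delta:
  assumes "pairwise orthogonal B" "\<forall>b\<in>B. norm b = 1" "b \<in> B" "v \<in> B"
  shows "v \<bullet> b = (if v = b then 1 else (0::real))"
  using assms
  by (auto simp: pairwise_def orthogonal_def power2_norm_eq_inner[symmetric])

lemma orth_expand:
  fixes x :: "real^'d"
  assumes fin: "finite B" and po: "pairwise orthogonal B" and nb: "\<forall>b\<in>B. norm b = 1"
    and sp: "span B = UNIV"
  shows "x = (\<Sum>b\<in>B. (b \<bullet> x) *\<^sub>R b)"
proof -
  have "x \<in> span B" using sp by simp
  then obtain u where xu: "x = (\<Sum>v\<in>B. u v *\<^sub>R v)"
    using span_finite[OF fin] by auto
  have "b \<bullet> x = u b" if b: "b \<in> B" for b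
  proof -
    have "b \<bullet> x = (\<Sum>v\<in>B. u v * (v \<bullet> b))" by (simp add: xu inner_sum_right inner_commute)
    also have "\<dots> = (\<Sum>v\<in>B. if v = b then u b else 0)"
      by (rule sum.cong) (auto simp: orth_delta[OF po nb b])
    also have "\<dots> = u b" using fin b by simp
    finally show ?thesis .
  qed
  then have "(\<Sum>b\<in>B. (b \<bullet> x) *\<^sub>R b) = (\<Sum>v\<in>B. u v *\<^sub>R v)" by (intro sum.cong) auto
  then show ?thesis using xu by simp
qed

lemma psd_sqrt_ex1:
  fixes M :: "real^'d^'d"
  assumes psd: "psd_mat M"
  shows "\<exists>!R. psd_mat R \<and> R ** R = M"
proof -
  have symM: "transpose M = M" and posM: "\<And>x. 0 \<le> x \<bullet> (M *v x)" using psd by (auto simp: psd_mat_def)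
  obtain B where fin: "finite B" and po: "pairwise orthogonal B"
    and nb: "\<forall>b\<in>B. norm b = 1" and eig: "\<forall>b\<in>B. \<exists>l. M *v b = l *\<^sub>R b" and sp: "span B = UNIV"
    using spectral_sub[OF symM, of UNIV] by auto
  define lam where "lam b = b \<bullet> (M *v b)" for b
  have Mb: "M *v b = lam b *\<^sub>R b" if bB: "b \<in> B" for b
  proof -
    obtain l where l: "M *v b = l *\<^sub>R b" using bspec[OF eig bB] by (elim exE)
    have bb: "b \<bullet> b = 1" using norm_eq_1[THEN iffD1, OF bspec[OF nb bB]] .
    have "lam b = b \<bullet> (l *\<^sub>R b)" by (simp only: lam_def l)
    also have "\<dots> = l" using bb by simp
    finally show ?thesis using l by simp
  qed
  have lam0: "lam b \<ge> 0" for b using posM by (simp add: lam_def)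
  have exp: "\<And>x. x = (\<Sum>b\<in>B. (b \<bullet> x) *\<^sub>R b)" by (rule orth_expand[OF fin po nb sp])
  define r where "r x = (\<Sum>b\<in>B. (sqrt (lam b) * (b \<bullet> x)) *\<^sub>R b)" for x
  have lin: "linear r"
  proof (rule linearI)
    show "r (x + y) = r x + r y" for x y
      by (simp add: r_def inner_add_right distrib_left scaleR_add_left sum.distrib)
    show "r (c *\<^sub>R x) = c *\<^sub>R r x" for c x
      unfolding r_def scaleR_sum_right by (rule sum.cong) (simp_all add: mult.left_commute)
  qed
  define R where "R = matrix r"
  have Rv: "R *v x = r x" for x using lin by (simp add: R_def matrix_works linear_matrix_vector_mul_eq)
  have rb: "r b = sqrt (lam b) *\<^sub>R b" if b: "b \<in> B" for b
  proof -
    have "r b = (\<Sum>v\<in>B. if v = b then sqrt (lam b) *\<^sub>R b else 0)"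
      unfolding r_def by (rule sum.cong) (auto simp: orth_delta[OF po nb b])
    also have "\<dots> = sqrt (lam b) *\<^sub>R b" using fin b by simp
    finally show ?thesis .
  qed
  have inner_r: "x \<bullet> r y = (\<Sum>b\<in>B. sqrt (lam b) * (b \<bullet> y) * (b \<bullet> x))" for x y
    by (simp add: r_def inner_sum_right inner_commute)
  have symR: "transpose R = R"
  proof (rule sym_from_inner)
    fix x y
    have "(R *v x) \<bullet> y = y \<bullet> (R *v x)" by (rule inner_commute)
    then show "x \<bullet> (R *v y) = (R *v x) \<bullet> y" by (simp only: Rv inner_r mult_ac)
  qed
  have posR: "0 \<le> x \<bullet> (R *v x)" for x
    unfolding Rv inner_r by (rule sum_nonneg) (simp add: mult.assoc lam0)
  have RR: "R ** R = M"
  proof (rule matrix_eq[THEN iffD2], rule allI)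
    fix x
    have "(R ** R) *v x = r (r x)" by (simp add: Rv matrix_vector_mul_assoc[symmetric])
    also have "\<dots> = (\<Sum>b\<in>B. (sqrt (lam b) * (b \<bullet> x)) *\<^sub>R r b)"
      unfolding r_def[of x] by (simp add: linear_sum[OF lin] linear_scale[OF lin])
    also have "\<dots> = (\<Sum>b\<in>B. (b \<bullet> x) *\<^sub>R (M *v b))"
      by (rule sum.cong) (auto simp: rb Mb lam0)
    also have "\<dots> = M *v (\<Sum>b\<in>B. (b \<bullet> x) *\<^sub>R b)"
      by (simp add: linear_sum[OF matrix_vector_mul_linear] matrix_vector_mult_scaleR)
    also have "\<dots> = M *v x" by (rule arg_cong[OF exp[of x, symmetric]])
    finally show "(R ** R) *v x = M *v x" .
  qed
  have uniq: "R' = R" if R': "psd_mat R'" "R' ** R' = M" for R'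
  proof (rule matrix_eq[THEN iffD2], rule allI)
    fix x
    have "R' *v x = R' *v (\<Sum>b\<in>B. (b \<bullet> x) *\<^sub>R b)" by (rule arg_cong[OF exp[of x]])
    also have "\<dots> = (\<Sum>b\<in>B. (b \<bullet> x) *\<^sub>R (R' *v b))"
      by (simp add: linear_sum[OF matrix_vector_mul_linear] matrix_vector_mult_scaleR)
    also have "\<dots> = (\<Sum>b\<in>B. (b \<bullet> x) *\<^sub>R r b)"
      by (rule sum.cong) (auto simp: rb sqrt_on_eig[OF R' Mb lam0])
    also have "\<dots> = r (\<Sum>b\<in>B. (b \<bullet> x) *\<^sub>R b)"
      by (simp add: linear_sum[OF lin] linear_scale[OF lin])
    also have "\<dots> = r x" by (rule arg_cong[OF exp[of x, symmetric]])
    also have "\<dots> = R *v x" by (simp add: Rv)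
    finally show "R' *v x = R *v x" .
  qed
  show ?thesis
    using symR posR RR uniq by (intro ex1I[of _ R]) (auto simp: psd_mat_def)
qed

lemma mat_sqrt_props:
  fixes M :: "real^'d^'d"
  assumes "psd_mat M"
  shows "psd_mat (mat_sqrt M)" "mat_sqrt M ** mat_sqrt M = M"
  using theI'[OF psd_sqrt_ex1[OF assms]] unfolding mat_sqrt_def by auto

lemma inv_props:
  fixes H :: "real^'d^'d"
  assumes "invertible H"
  shows "H ** matrix_inv H = mat 1" "matrix_inv H ** H = mat 1"
proof -
  have "\<exists>A'. H ** A' = mat 1 \<and> A' ** H = mat 1" using assms by (simp add: invertible_def)
  then have "H ** matrix_inv H = mat 1 \<and> matrix_inv H ** H = mat 1"
    unfolding matrix_inv_def by (rule someI_ex)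
  then show "H ** matrix_inv H = mat 1" "matrix_inv H ** H = mat 1" by auto
qed

lemma pd_facts:
  fixes H :: "real^'d^'d"
  assumes sym: "transpose H = H" and pos: "\<And>x. c * (x \<bullet> x) \<le> x \<bullet> (H *v x)" and c: "c > 0"
  shows "invertible H" "psd_mat (matrix_inv H)"
    "\<And>x. H *v (matrix_inv H *v x) = x" "\<And>x. matrix_inv H *v (H *v x) = x"
proof -
  have "\<forall>x. H *v x = 0 \<longrightarrow> x = 0"
  proof (intro allI impI)
    fix x assume "H *v x = 0"
    then have "c * (x \<bullet> x) \<le> 0" using pos[of x] by simp
    then have "x \<bullet> x \<le> 0" using c by (simp add: mult_le_0_iff)
    then show "x = 0" by (metis inner_eq_zero_iff inner_ge_zero order_antisym)
  qed
  then show inv: "invertible H"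
    using matrix_left_invertible_ker invertible_left_inverse by blast
  note ip = inv_props[OF inv]
  show HHi: "\<And>x. H *v (matrix_inv H *v x) = x" using ip(1) by (simp add: matrix_vector_mul_assoc)
  show HiH: "\<And>x. matrix_inv H *v (H *v x) = x" using ip(2) by (simp add: matrix_vector_mul_assoc)
  let ?Hi = "matrix_inv H"
  have "transpose ?Hi = ?Hi"
  proof (rule sym_from_inner)
    fix x y
    have "x \<bullet> (?Hi *v y) = (H *v (?Hi *v x)) \<bullet> (?Hi *v y)" by (simp add: HHi)
    also have "\<dots> = (?Hi *v x) \<bullet> (H *v (?Hi *v y))" by (simp add: sym_inner[OF sym])
    also have "\<dots> = (?Hi *v x) \<bullet> y" by (simp add: HHi)
    finally show "x \<bullet> (?Hi *v y) = (?Hi *v x) \<bullet> y" .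
  qed
  moreover have "0 \<le> x \<bullet> (?Hi *v x)" for x
  proof -
    have "x \<bullet> (?Hi *v x) = (H *v (?Hi *v x)) \<bullet> (?Hi *v x)" by (simp add: HHi)
    also have "\<dots> = (?Hi *v x) \<bullet> (H *v (?Hi *v x))" by (simp add: inner_commute)
    also have "\<dots> \<ge> c * ((?Hi *v x) \<bullet> (?Hi *v x))" by (rule pos)
    finally show ?thesis using c by (smt (verit) inner_ge_zero mult_nonneg_nonneg)
  qed
  ultimately show "psd_mat ?Hi" by (simp add: psd_mat_def)
qed

lemma diag_inner:
  fixes Lam :: "real^'d^'d"
  assumes "diag_mat Lam" "\<forall>i. Lam $ i $ i \<ge> 1"
  shows "x \<bullet> x \<le> x \<bullet> (Lam *v x)" "transpose Lam = Lam"
proof -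
  have Lx: "(Lam *v x) $ i = Lam $ i $ i * x $ i" for i
  proof -
    have "(Lam *v x) $ i = (\<Sum>j\<in>UNIV. Lam $ i $ j * x $ j)" by (simp add: matrix_vector_mult_def)
    also have "\<dots> = (\<Sum>j\<in>UNIV. if j = i then Lam $ i $ i * x $ i else 0)"
      by (rule sum.cong) (use assms(1) in \<open>auto simp: diag_mat_def\<close>)
    finally show ?thesis by simp
  qed
  have "x \<bullet> x = (\<Sum>i\<in>UNIV. x $ i * x $ i)" by (simp add: inner_vec_def)
  also have "\<dots> \<le> (\<Sum>i\<in>UNIV. x $ i * (Lam $ i $ i * x $ i))"
  proof (rule sum_mono)
    fix i
    have "1 * (x $ i * x $ i) \<le> Lam $ i $ i * (x $ i * x $ i)"
      by (rule mult_right_mono) (use assms(2) in auto)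
    then show "x $ i * x $ i \<le> x $ i * (Lam $ i $ i * x $ i)" by (simp add: mult_ac)
  qed
  also have "\<dots> = x \<bullet> (Lam *v x)" by (simp add: inner_vec_def Lx)
  finally show "x \<bullet> x \<le> x \<bullet> (Lam *v x)" .
  show "transpose Lam = Lam"
    using assms(1) unfolding transpose_def diag_mat_def vec_eq_iff by (metis vec_lambda_beta)
qed

lemma gram_inner:
  fixes A :: "real^'d^'n"
  shows "x \<bullet> (sketch_gram m S A *v y) = (\<Sum>i<m. ((S i v* A) \<bullet> x) * ((S i v* A) \<bullet> y))"
proof -
  let ?r = "\<lambda>i. S i v* A"
  have "x \<bullet> (sketch_gram m S A *v y) =
     (\<Sum>j\<in>UNIV. x $ j * (\<Sum>k\<in>UNIV. (\<Sum>i<m. ?r i $ j * ?r i $ k) * y $ k))"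
    by (simp add: inner_vec_def matrix_vector_mult_def sketch_gram_def)
  also have "\<dots> = (\<Sum>j\<in>UNIV. \<Sum>k\<in>UNIV. \<Sum>i<m. (?r i $ j * x $ j) * (?r i $ k * y $ k))"
    by (simp add: sum_distrib_left sum_distrib_right mult_ac)
  also have "\<dots> = (\<Sum>i<m. \<Sum>j\<in>UNIV. \<Sum>k\<in>UNIV. (?r i $ j * x $ j) * (?r i $ k * y $ k))"
    by (rule trans[OF sum.cong[OF refl sum.swap] sum.swap])
  also have "\<dots> = (\<Sum>i<m. (?r i \<bullet> x) * (?r i \<bullet> y))"
    by (simp add: inner_vec_def sum_product)
  finally show ?thesis .
qed

lemma hess_facts:
  fixes A :: "real^'d^'n"
  assumes "diag_mat Lam" "\<forall>i. Lam $ i $ i \<ge> 1" "nu > 0"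
  shows "transpose (hess A Lam nu) = hess A Lam nu"
    "\<And>x. nu^2 * (x \<bullet> x) \<le> x \<bullet> (hess A Lam nu *v x)"
    "transpose (hess_S A Lam nu m S) = hess_S A Lam nu m S"
    "\<And>x. nu^2 * (x \<bullet> x) \<le> x \<bullet> (hess_S A Lam nu m S *v x)"
proof -
  note dl = diag_inner[OF assms(1,2)]
  have ATA: "x \<bullet> ((transpose A ** A) *v y) = (A *v x) \<bullet> (A *v y)" for x y
  proof -
    have "x \<bullet> ((transpose A ** A) *v y) = ((A *v y) v* A) \<bullet> x"
      by (simp add: matrix_vector_mul_assoc[symmetric] inner_commute)
    also have "\<dots> = (A *v y) \<bullet> (A *v x)" by (rule dot_lmul_matrix)
    finally show ?thesis by (simp add: inner_commute)
  qed
  have L: "nu^2 * (x \<bullet> x) \<le> x \<bullet> ((nu^2 *\<^sub>R Lam) *v x)" for x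
    using dl(1)[of x] by (simp add: scaleR_matrix_vector_assoc[symmetric] mult_left_mono)
  have Ls: "x \<bullet> ((nu^2 *\<^sub>R Lam) *v y) = ((nu^2 *\<^sub>R Lam) *v x) \<bullet> y" for x y
    by (rule sym_inner) (simp add: dl(2) transpose_scalar)
  have As: "x \<bullet> ((transpose A ** A) *v y) = ((transpose A ** A) *v x) \<bullet> y" for x y
  proof -
    have "((transpose A ** A) *v x) \<bullet> y = y \<bullet> ((transpose A ** A) *v x)" by (rule inner_commute)
    then show ?thesis unfolding ATA by (simp only: inner_commute)
  qed
  show "transpose (hess A Lam nu) = hess A Lam nu"
  proof (rule sym_from_inner)
    fix x y
    show "x \<bullet> (hess A Lam nu *v y) = (hess A Lam nu *v x) \<bullet> y"
      unfolding hess_def matrix_vector_mult_add_rdistrib inner_add_right inner_add_left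
      using As Ls by simp
  qed
  show "nu^2 * (x \<bullet> x) \<le> x \<bullet> (hess A Lam nu *v x)" for x
    unfolding hess_def matrix_vector_mult_add_rdistrib inner_add_right ATA
    using L[of x] inner_ge_zero[of "A *v x"] by linarith
  have Gs: "x \<bullet> (sketch_gram m S A *v y) = (sketch_gram m S A *v x) \<bullet> y" for x y
  proof -
    have "(sketch_gram m S A *v x) \<bullet> y = y \<bullet> (sketch_gram m S A *v x)" by (rule inner_commute)
    then show ?thesis unfolding gram_inner by (simp add: mult.commute)
  qed
  show "transpose (hess_S A Lam nu m S) = hess_S A Lam nu m S"
  proof (rule sym_from_inner)
    fix x y
    show "x \<bullet> (hess_S A Lam nu m S *v y) = (hess_S A Lam nu m S *v x) \<bullet> y"
      unfolding hess_S_def matrix_vector_mult_add_rdistrib inner_add_right inner_add_left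
      using Gs Ls by simp
  qed
  show "nu^2 * (x \<bullet> x) \<le> x \<bullet> (hess_S A Lam nu m S *v x)" for x
  proof -
    have "0 \<le> x \<bullet> (sketch_gram m S A *v x)" by (simp add: gram_inner sum_nonneg)
    then show ?thesis
      using L[of x] by (simp add: hess_S_def matrix_vector_mult_add_rdistrib inner_add_right)
  qed
qed

lemma key_ineq:
  fixes n a t s :: real
  assumes s0: "0 \<le> s" and s1: "s < 1" and a0: "0 \<le> a" and n0: "0 \<le> n"
    and asn: "a \<le> s * n" and tan: "\<bar>t\<bar> \<le> a * n"
  shows "\<bar>(n^2 + 2*t + a^2)/2 - (n^2 + t)/2\<bar> \<le> s * ((n^2 + t)/2)"
proof -
  have sn: "s * n \<le> n" using s1 n0 mult_right_mono[of s 1 n] by simp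
  have u1: "(1 - s) * t \<le> (1 - s) * (a * n)" using s1 tan by (intro mult_left_mono) auto
  have u2: "(a - s * n) * (a + n) \<le> 0" using asn a0 n0 by (intro mult_nonpos_nonneg) auto
  have l1: "(1 + s) * (- (a * n)) \<le> (1 + s) * t" using s0 tan by (intro mult_left_mono) auto
  have l2: "0 \<le> (a - n) * (a - s * n)" using asn sn by (intro mult_nonpos_nonpos) auto
  have up: "t + a^2 \<le> s * (n^2 + t)"
    using u1 u2 by (simp add: algebra_simps power2_eq_square)
  have lo: "- (t + a^2) \<le> s * (n^2 + t)"
    using l1 l2 by (simp add: algebra_simps power2_eq_square)
  have eq: "(n^2 + 2*t + a^2)/2 - (n^2 + t)/2 = (t + a^2) / 2" by (simp add: field_simps)
  show ?thesis unfolding eq using up lo by (simp add: abs_le_iff)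
qed

lemma part1:
  fixes A :: "real^'d^'n" and b :: "real^'d" and Lam :: "real^'d^'d" and nu :: real
  assumes dg: "diag_mat Lam" and L1: "\<forall>i. Lam $ i $ i \<ge> 1" and nu: "nu > 0"
    and r0: "0 < rho" and r1: "rho < 1" and ev: "event_E A Lam nu m rho S"
  shows "\<bar>delta A Lam nu b x - delta_tilde A Lam nu b m S x\<bar>
           \<le> sqrt rho * delta_tilde A Lam nu b m S x"
proof -
  define H where "H = hess A Lam nu"
  define HS where "HS = hess_S A Lam nu m S"
  define Hi where "Hi = matrix_inv H"
  define HSi where "HSi = matrix_inv HS"
  define R where "R = mat_sqrt Hi"
  have nu2: "nu^2 > 0" using nu by simp
  have h1: "transpose H = H" using hess_facts(1)[OF dg L1 nu] by (simp add: H_def)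
  have h2: "\<And>y. nu^2 * (y \<bullet> y) \<le> y \<bullet> (H *v y)" using hess_facts(2)[OF dg L1 nu] by (simp add: H_def)
  have h3: "transpose HS = HS" using hess_facts(3)[OF dg L1 nu] by (simp add: HS_def)
  have h4: "\<And>y. nu^2 * (y \<bullet> y) \<le> y \<bullet> (HS *v y)" using hess_facts(4)[OF dg L1 nu] by (simp add: HS_def)
  note pH = pd_facts[OF h1 h2 nu2, folded Hi_def]
  note pS = pd_facts[OF h3 h4 nu2, folded HSi_def]
  note Rp = mat_sqrt_props[OF pH(2), folded R_def]
  have symR: "transpose R = R" using Rp(1) by (simp add: psd_mat_def)
  have RRv: "R *v (R *v y) = Hi *v y" for y using Rp(2) by (simp add: matrix_vector_mul_assoc)
  define g where "g = H *v x - b"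
  have gdef: "grad_f A Lam nu b x = g" by (simp add: grad_f_def g_def H_def)
  define v where "v = R *v g"
  define z where "z = x - Hi *v b"
  have Hz: "H *v z = g" by (simp add: z_def g_def matrix_vector_mult_diff_distrib pH(3))
  have zg: "z = Hi *v g" using pH(4)[of z] Hz by simp
  have "z \<bullet> (H *v z) = v \<bullet> v"
  proof -
    have "z \<bullet> (H *v z) = (R *v (R *v g)) \<bullet> g" by (simp add: Hz zg RRv pH(3))
    also have "\<dots> = (R *v g) \<bullet> (R *v g)" by (rule sym_inner[OF symR, symmetric])
    finally show ?thesis by (simp add: v_def)
  qed
  then have dlt: "delta A Lam nu b x = (v \<bullet> v) / 2"
    by (simp add: delta_def Let_def xstar_def H_def[symmetric] Hi_def[symmetric] z_def[symmetric])
  define h where "h = HSi *v g"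
  have dlt2: "delta_tilde A Lam nu b m S x = (g \<bullet> h) / 2"
    by (simp add: delta_tilde_def Let_def gdef h_def HSi_def HS_def)
  define Ri where "Ri = R ** H"
  have RRi: "R *v (Ri *v y) = y" for y
    by (simp add: Ri_def matrix_vector_mul_assoc[symmetric] RRv pH(4))
  define w where "w = Ri *v h"
  define C where "C = R ** HS ** R"
  have Cdef: "C_S A Lam nu m S = C"
    by (simp add: C_S_def Let_def C_def R_def Hi_def H_def HS_def)
  have Cw: "C *v w = v"
    by (simp add: C_def w_def matrix_vector_mul_assoc[symmetric] RRi h_def pS(3) v_def)
  have Ew: "(C - mat 1) *v w = v - w"
    by (simp add: matrix_vector_mult_diff_rdistrib Cw)
  define s where "s = sqrt rho"
  have s0: "0 \<le> s" and s1: "s < 1" using r0 r1 by (auto simp: s_def)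
  have "rho \<le> s"
  proof -
    have "rho = s * s" using r0 by (simp add: s_def)
    also have "\<dots> \<le> 1 * s" using s0 s1 by (intro mult_right_mono) auto
    finally show ?thesis by simp
  qed
  then have mx: "max (sqrt rho) rho = s" by (simp add: s_def)
  have sn: "spec_norm (C - mat 1) \<le> s" using ev mx by (simp add: event_E_def Cdef)
  have "norm (v - w) \<le> spec_norm (C - mat 1) * norm w"
    unfolding spec_norm_def Ew[symmetric] by (rule onorm) simp
  also have "\<dots> \<le> s * norm w" using sn by (intro mult_right_mono) auto
  finally have ew: "norm (v - w) \<le> s * norm w" .
  have wv: "w \<bullet> v = g \<bullet> h"
  proof -
    have "w \<bullet> v = (R *v w) \<bullet> g" by (simp add: v_def sym_inner[OF symR])
    also have "\<dots> = h \<bullet> g" by (simp add: w_def RRi)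
    finally show ?thesis by (simp add: inner_commute)
  qed
  define e where "e = v - w"
  have ve: "v = w + e" by (simp add: e_def)
  have vv: "v \<bullet> v = (norm w)^2 + 2 * (w \<bullet> e) + (norm e)^2"
    unfolding ve by (simp add: inner_add_left inner_add_right inner_commute power2_norm_eq_inner)
  have wv2: "w \<bullet> v = (norm w)^2 + (w \<bullet> e)"
    unfolding ve by (simp add: inner_add_right power2_norm_eq_inner)
  have cs: "\<bar>w \<bullet> e\<bar> \<le> norm e * norm w"
    using Cauchy_Schwarz_ineq2[of w e] by (simp add: mult.commute)
  have "\<bar>((norm w)^2 + 2 * (w \<bullet> e) + (norm e)^2)/2 - ((norm w)^2 + (w \<bullet> e))/2\<bar>
        \<le> s * (((norm w)^2 + (w \<bullet> e))/2)"
    by (rule key_ineq[OF s0 s1 norm_ge_zero norm_ge_zero _ cs]) (use ew e_def in simp)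
  then show ?thesis
    unfolding dlt dlt2 wv[symmetric] vv[symmetric] wv2[symmetric] s_def .
qed

theorem lemma2p1:
  fixes A :: "real^'d^'n" and b :: "real^'d" and Lam :: "real^'d^'d" and nu :: real
  assumes "CARD('d) \<le> CARD('n)"
    and "diag_mat Lam" and "\<forall>i. Lam $ i $ i \<ge> 1"
    and "nu > 0"
  shows "(\<forall>rho m S. 0 < rho \<and> rho < 1 \<and> event_E A Lam nu m rho S \<longrightarrow>
            (\<forall>x. \<bar>delta A Lam nu b x - delta_tilde A Lam nu b m S x\<bar>
                   \<le> sqrt rho * delta_tilde A Lam nu b m S x))
       \<and> (\<forall>D dl m. (\<forall>k. prob_space (D k)) \<and> 0 < dl \<and> dl < 1
            \<and> crit_set A Lam nu D dl \<noteq> {} \<and> m > crit_size A Lam nu D dl \<longrightarrow>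
            prob_atleast (D m)
              {S. \<forall>x. \<bar>delta A Lam nu b x - delta_tilde A Lam nu b m S x\<bar>
                   \<le> sqrt (real (crit_size A Lam nu D dl) / real m) * delta_tilde A Lam nu b m S x}
              (1 - dl))"
proof -
  have P1: "\<forall>rho m S. 0 < rho \<and> rho < 1 \<and> event_E A Lam nu m rho S \<longrightarrow>
            (\<forall>x. \<bar>delta A Lam nu b x - delta_tilde A Lam nu b m S x\<bar>
                   \<le> sqrt rho * delta_tilde A Lam nu b m S x)"
    using part1[OF assms(2,3,4)] by blast
  have P2: "\<forall>D dl m. (\<forall>k. prob_space (D k)) \<and> 0 < dl \<and> dl < 1
            \<and> crit_set A Lam nu D dl \<noteq> {} \<and> m > crit_size A Lam nu D dl \<longrightarrow>
            prob_atleast (D m)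
              {S. \<forall>x. \<bar>delta A Lam nu b x - delta_tilde A Lam nu b m S x\<bar>
                   \<le> sqrt (real (crit_size A Lam nu D dl) / real m) * delta_tilde A Lam nu b m S x}
              (1 - dl)"
  proof (intro allI impI)
    fix D dl m
    assume H: "(\<forall>k. prob_space (D k)) \<and> 0 < dl \<and> dl < 1
            \<and> crit_set A Lam nu D dl \<noteq> {} \<and> m > crit_size A Lam nu D dl"
    define k where "k = crit_size A Lam nu D dl"
    have kin: "k \<in> crit_set A Lam nu D dl"
      unfolding k_def crit_size_def using H by (intro Inf_nat_def1) auto
    then have k1: "k \<ge> 1" and kP: "\<forall>rho>0. \<forall>m::nat. m \<ge> 1 \<longrightarrow> real m \<ge> real k / rho \<longrightarrow>
        prob_atleast (D m) {S. event_E A Lam nu m rho S} (1 - dl)"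
      by (auto simp: crit_set_def)
    have km: "k < m" using H k_def by simp
    define rho where "rho = real k / real m"
    have r0: "0 < rho" using k1 km by (simp add: rho_def)
    have r1: "rho < 1" using k1 km by (simp add: rho_def)
    have m1: "m \<ge> 1" using k1 km by simp
    have "real k / rho = real m" using k1 km by (simp add: rho_def)
    then have "prob_atleast (D m) {S. event_E A Lam nu m rho S} (1 - dl)"
      using kP r0 m1 by simp
    then obtain F where F: "F \<in> sets (D m)" "F \<subseteq> {S. event_E A Lam nu m rho S}" "measure (D m) F \<ge> 1 - dl"
      by (auto simp: prob_atleast_def)
    have "F \<subseteq> {S. \<forall>x. \<bar>delta A Lam nu b x - delta_tilde A Lam nu b m S x\<bar>
                   \<le> sqrt (real (crit_size A Lam nu D dl) / real m) * delta_tilde A Lam nu b m S x}"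
      using F(2) P1 r0 r1 by (auto simp: rho_def k_def)
    then show "prob_atleast (D m)
              {S. \<forall>x. \<bar>delta A Lam nu b x - delta_tilde A Lam nu b m S x\<bar>
                   \<le> sqrt (real (crit_size A Lam nu D dl) / real m) * delta_tilde A Lam nu b m S x}
              (1 - dl)"
      using F(1,3) by (auto simp: prob_atleast_def)
  qed
  show ?thesis using P1 P2 by blast
qed

end
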